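(* In the odd setting below, for all $i,j\in\{1,\dots,n\}$ and $\ell\in\{0,\dots,s-1\}$, the determinant $D^j_{2\ell,i}$ is homogeneous of degree $\ell/s$.
   Context: Odd setting: integers $n\ge1$, $s\ge1$, $m=2s+1$; $a_k^0,\dots,a_k^{2s}$ are $n\times n$ matrices with indeterminate entries, $N$-periodic in $k$. $Q_k$ is the $mn\times mn$ block matrix with $I_n$ in blocks $(i+1,i)$, last block column $(a_k^0;\dots;a_k^{2s})$, $O_n$ elsewhere. $r_k=(a_k^0;O_n;a_k^2;O_n;\dots;O_n;a_k^{2s})$. $F^{(k)}_0=r_k$, $F^{(k)}_\ell=Q_k\cdots Q_{k+\ell-1}r_{k+\ell}$ ($mn\times n$), $N_k=(F^{(k)}_0,\dots,F^{(k)}_{2s})$. For $0\le \rho\le 2s$, $D^j_{\rho,i}$ (for a fixed $k$) is the determinant of the matrix obtained from $N_k$ by replacing the $i$-th column of the block column $F^{(k)}_\rho$ by the $j$-th column of $F^{(k)}_{2s+1}$. The scaling, for $\mu>0$: $a^{2r+1}\mapsto\mu^{-1+r/s}a^{2r+1}$ ($r=0,\dots,s-1$), $a^{2r}\mapsto\mu^{r/s}a^{2r}$ ($r=0,\dots,s$); homogeneous of degree $d$ means multiplied by $\mu^d$. *)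

theory Defs
  imports "Jordan_Normal_Form.Determinant"
begin

text \<open>Coefficient data: a k r p q is the (p,q) entry (0-indexed, p,q < n)
  of the n x n matrix a_k^r (r = 0..2s).  Blocks are indexed from 0.\<close>

definition Qmat :: "(nat \<Rightarrow> nat \<Rightarrow> nat \<Rightarrow> nat \<Rightarrow> real) \<Rightarrow> nat \<Rightarrow> nat \<Rightarrow> nat \<Rightarrow> real mat" where
  "Qmat a n s k = mat ((2*s+1)*n) ((2*s+1)*n)
     (\<lambda>(p,q). if q div n = 2*s then a k (p div n) (p mod n) (q mod n)
              else if p div n = q div n + 1 \<and> p mod n = q mod n then 1 else 0)"

definition rmat :: "(nat \<Rightarrow> nat \<Rightarrow> nat \<Rightarrow> nat \<Rightarrow> real) \<Rightarrow> nat \<Rightarrow> nat \<Rightarrow> nat \<Rightarrow> real mat" where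
  "rmat a n s k = mat ((2*s+1)*n) n
     (\<lambda>(p,q). if even (p div n) then a k (p div n) (p mod n) q else 0)"

fun prodQ :: "(nat \<Rightarrow> nat \<Rightarrow> nat \<Rightarrow> nat \<Rightarrow> real) \<Rightarrow> nat \<Rightarrow> nat \<Rightarrow> nat \<Rightarrow> nat \<Rightarrow> real mat" where
  "prodQ a n s k 0 = 1\<^sub>m ((2*s+1)*n)"
| "prodQ a n s k (Suc l) = prodQ a n s k l * Qmat a n s (k + l)"

definition Fmat :: "(nat \<Rightarrow> nat \<Rightarrow> nat \<Rightarrow> nat \<Rightarrow> real) \<Rightarrow> nat \<Rightarrow> nat \<Rightarrow> nat \<Rightarrow> nat \<Rightarrow> real mat" where
  "Fmat a n s k l = prodQ a n s k l * rmat a n s (k + l)"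

text \<open>N_k = (F_0, ..., F_{2s}); column c lies in block c div n, at column c mod n.\<close>
definition Nmat :: "(nat \<Rightarrow> nat \<Rightarrow> nat \<Rightarrow> nat \<Rightarrow> real) \<Rightarrow> nat \<Rightarrow> nat \<Rightarrow> nat \<Rightarrow> real mat" where
  "Nmat a n s k = mat ((2*s+1)*n) ((2*s+1)*n)
     (\<lambda>(p,c). Fmat a n s k (c div n) $$ (p, c mod n))"

text \<open>D^j_{rho,i} with i, j in {1..n} (1-indexed as in the paper).\<close>
definition Ddet :: "(nat \<Rightarrow> nat \<Rightarrow> nat \<Rightarrow> nat \<Rightarrow> real) \<Rightarrow> nat \<Rightarrow> nat \<Rightarrow> nat \<Rightarrow> nat \<Rightarrow> nat \<Rightarrow> nat \<Rightarrow> real" where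
  "Ddet a n s k \<rho> i j = det (mat ((2*s+1)*n) ((2*s+1)*n)
     (\<lambda>(p,c). if c = \<rho>*n + (i - 1) then Fmat a n s k (2*s+1) $$ (p, j - 1)
              else Nmat a n s k $$ (p, c)))"

definition scale :: "real \<Rightarrow> nat \<Rightarrow> (nat \<Rightarrow> nat \<Rightarrow> nat \<Rightarrow> nat \<Rightarrow> real) \<Rightarrow> (nat \<Rightarrow> nat \<Rightarrow> nat \<Rightarrow> nat \<Rightarrow> real)" where
  "scale \<mu> s a = (\<lambda>k r p q.
     (if even r then \<mu> powr (real (r div 2) / real s)
      else \<mu> powr (-1 + real (r div 2) / real s)) * a k r p q)"

end

theory Submission
  imports Defs
begin

lemma sum_blocks: fixes f :: "nat \<Rightarrow> 'a::comm_monoid_add" shows "(\<Sum>x<m*n. f x) = (\<Sum>t<m. \<Sum>q<n. f (t*n+q))"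
proof (induction m)
  case 0 then show ?case by simp
next
  case (Suc m)
  have "{..<Suc m * n} = {..<m*n} \<union> {m*n..<m*n+n}" by auto
  then have "(\<Sum>x<Suc m*n. f x) = (\<Sum>x<m*n. f x) + (\<Sum>x\<in>{m*n..<m*n+n}. f x)"
    by (simp add: sum.union_disjoint ivl_disj_int)
  also have "(\<Sum>x\<in>{m*n..<m*n+n}. f x) = (\<Sum>q<n. f (m*n+q))"
    by (rule sum.reindex_bij_witness[of _ "\<lambda>q. m*n+q" "\<lambda>x. x - m*n"]) auto
  finally show ?case using Suc by simp
qed

lemma det_weight:
  fixes A :: "'a::comm_ring_1 mat" and w :: "nat \<Rightarrow> nat"
  assumes A: "A \<in> carrier_mat N N"
    and W: "\<And>i j. i < N \<Longrightarrow> j < N \<Longrightarrow> i \<noteq> j \<Longrightarrow> A $$ (i,j) \<noteq> 0 \<Longrightarrow> w i < w j"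
  shows "det A = (\<Prod>i=0..<N. A $$ (i,i))"
proof -
  let ?U = "{0..<N}"
  let ?PU = "{p. p permutes ?U}"
  let ?pp = "\<lambda>p. signof p * (\<Prod> i = 0 ..< N. A $$ (i, p i))"
  have zero: "?pp p = 0" if p: "p permutes ?U" and ne: "p \<noteq> id" for p
  proof (rule ccontr)
    assume "?pp p \<noteq> 0"
    then have "(\<Prod> i = 0 ..< N. A $$ (i, p i)) \<noteq> 0" by auto
    then have nz: "\<And>i. i < N \<Longrightarrow> A $$ (i, p i) \<noteq> 0" using prod_zero[of "{0..<N}" "\<lambda>i. A $$ (i, p i)"] by force
    have pi: "\<And>i. i < N \<Longrightarrow> p i < N" using p permutes_in_image by fastforce
    have le: "\<And>i. i \<in> ?U \<Longrightarrow> w i \<le> w (p i)"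
      using W nz pi by (metis atLeastLessThan_iff less_imp_le order_refl)
    obtain i where i: "p i \<noteq> i" using ne by (metis eq_id_iff)
    then have iU: "i \<in> ?U" using p by (meson permutes_not_in)
    have lt: "w i < w (p i)" using W nz pi iU i by auto
    have "sum w ?U < sum (w \<circ> p) ?U"
      by (rule sum_strict_mono_ex1) (use le lt iU in auto)
    moreover have "sum w ?U = sum (w \<circ> p) ?U" by (rule sum.permute[OF p])
    ultimately show False by simp
  qed
  have "det A = sum ?pp ?PU" by (rule det_def'[OF A])
  also have "\<dots> = ?pp id + sum ?pp (?PU - {id})"
    by (rule sum.remove) (auto simp: permutes_id finite_permutations)
  also have "sum ?pp (?PU - {id}) = 0" by (rule sum.neutral) (use zero in auto)
  finally show ?thesis by simp
qed

lemma swap4: fixes f :: "'a \<Rightarrow> 'b \<Rightarrow> 'c \<Rightarrow> 'd \<Rightarrow> 'e::comm_monoid_add"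
  shows "(\<Sum>x\<in>A. \<Sum>y\<in>B. \<Sum>t\<in>T. \<Sum>q\<in>R. f x y t q) = (\<Sum>t\<in>T. \<Sum>q\<in>R. \<Sum>x\<in>A. \<Sum>y\<in>B. f x y t q)"
proof -
  have "(\<Sum>x\<in>A. \<Sum>y\<in>B. \<Sum>t\<in>T. \<Sum>q\<in>R. f x y t q) = (\<Sum>x\<in>A. \<Sum>t\<in>T. \<Sum>y\<in>B. \<Sum>q\<in>R. f x y t q)"
    by (rule sum.cong[OF refl], rule sum.swap)
  also have "\<dots> = (\<Sum>x\<in>A. \<Sum>t\<in>T. \<Sum>q\<in>R. \<Sum>y\<in>B. f x y t q)"
    by (rule sum.cong[OF refl], rule sum.cong[OF refl], rule sum.swap)
  also have "\<dots> = (\<Sum>t\<in>T. \<Sum>x\<in>A. \<Sum>q\<in>R. \<Sum>y\<in>B. f x y t q)"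
    by (rule sum.swap)
  also have "\<dots> = (\<Sum>t\<in>T. \<Sum>q\<in>R. \<Sum>x\<in>A. \<Sum>y\<in>B. f x y t q)"
    by (rule sum.cong[OF refl], rule sum.swap)
  finally show ?thesis .
qed

lemma Qmat_carrier[simp]: "Qmat a n s k \<in> carrier_mat ((2*s+1)*n) ((2*s+1)*n)"
  by (simp add: Qmat_def)
lemma rmat_carrier[simp]: "rmat a n s k \<in> carrier_mat ((2*s+1)*n) n"
  by (simp add: rmat_def)
lemma prodQ_carrier[simp]: "prodQ a n s k l \<in> carrier_mat ((2*s+1)*n) ((2*s+1)*n)"
proof (induction l)
  case 0 show ?case by (simp only: prodQ.simps one_carrier_mat)
next
  case (Suc l) show ?case by (simp only: prodQ.simps) (rule mult_carrier_mat[OF Suc.IH Qmat_carrier])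
qed

lemma prodQ_Suc': "prodQ a n s k (Suc l) = Qmat a n s k * prodQ a n s (Suc k) l"
proof (induction l arbitrary: k)
  case 0
  have "1\<^sub>m ((2*s+1)*n) * Qmat a n s k = Qmat a n s k * 1\<^sub>m ((2*s+1)*n)"
    using left_mult_one_mat[OF Qmat_carrier] right_mult_one_mat[OF Qmat_carrier] by metis
  then show ?case by simp
next
  case (Suc l)
  have "prodQ a n s k (Suc (Suc l)) = prodQ a n s k (Suc l) * Qmat a n s (k + Suc l)" by simp
  also have "\<dots> = (Qmat a n s k * prodQ a n s (Suc k) l) * Qmat a n s (Suc k + l)"
    using Suc by simp
  also have "\<dots> = Qmat a n s k * (prodQ a n s (Suc k) l * Qmat a n s (Suc k + l))"
    by (rule assoc_mult_mat[OF Qmat_carrier prodQ_carrier Qmat_carrier])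
  finally show ?case by simp
qed

lemma Fmat_Suc: "Fmat a n s k (Suc l) = Qmat a n s k * Fmat a n s (Suc k) l"
proof -
  have "Fmat a n s k (Suc l) = Qmat a n s k * prodQ a n s (Suc k) l * rmat a n s (Suc k + l)"
    unfolding Fmat_def prodQ_Suc' by simp
  also have "\<dots> = Qmat a n s k * (prodQ a n s (Suc k) l * rmat a n s (Suc k + l))"
    by (rule assoc_mult_mat[OF Qmat_carrier prodQ_carrier rmat_carrier])
  finally show ?thesis unfolding Fmat_def .
qed

lemma Fmat_carrier[simp]: "Fmat a n s k l \<in> carrier_mat ((2*s+1)*n) n"
  unfolding Fmat_def by (rule mult_carrier_mat[OF prodQ_carrier rmat_carrier])

locale S =
  fixes n s :: nat and \<mu> :: real
  assumes n1: "1 \<le> n" and s1: "1 \<le> s" and mu: "0 < \<mu>"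
begin

definition Qf :: "(nat \<Rightarrow> nat \<Rightarrow> nat \<Rightarrow> nat \<Rightarrow> real) \<Rightarrow> nat \<Rightarrow> nat \<Rightarrow> nat \<Rightarrow> real" where
  "Qf b k p q = (if q div n = 2*s then b k (p div n) (p mod n) (q mod n)
              else if p div n = q div n + 1 \<and> p mod n = q mod n then 1 else 0)"

definition rf :: "(nat \<Rightarrow> nat \<Rightarrow> nat \<Rightarrow> nat \<Rightarrow> real) \<Rightarrow> nat \<Rightarrow> nat \<Rightarrow> nat \<Rightarrow> real" where
  "rf b k p q = (if even (p div n) then b k (p div n) (p mod n) q else 0)"

fun Ff :: "(nat \<Rightarrow> nat \<Rightarrow> nat \<Rightarrow> nat \<Rightarrow> real) \<Rightarrow> nat \<Rightarrow> nat \<Rightarrow> nat \<Rightarrow> nat \<Rightarrow> real" where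
  "Ff b k 0 p q = rf b k p q"
| "Ff b k (Suc l) p q = (\<Sum>x<(2*s+1)*n. Qf b k p x * Ff b (Suc k) l x q)"

lemma Fmat_Ff: "p < (2*s+1)*n \<Longrightarrow> q < n \<Longrightarrow> Fmat b n s k l $$ (p,q) = Ff b k l p q"
proof (induction l arbitrary: k p q)
  case 0
  then show ?case by (simp add: Fmat_def rmat_def rf_def)
next
  case (Suc l)
  have "Fmat b n s k (Suc l) $$ (p,q) = (\<Sum>x<(2*s+1)*n. Qmat b n s k $$ (p,x) * Fmat b n s (Suc k) l $$ (x,q))"
    unfolding Fmat_Suc using Suc.prems Fmat_carrier[of b n s "Suc k" l] Qmat_carrier[of b n s k]
    by (subst index_mult_mat) (auto simp: scalar_prod_def lessThan_atLeast0)
  also have "\<dots> = (\<Sum>x<(2*s+1)*n. Qf b k p x * Ff b (Suc k) l x q)"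
    by (rule sum.cong) (use Suc in \<open>auto simp: Qmat_def Qf_def\<close>)
  finally show ?case by simp
qed


definition cc :: "nat \<Rightarrow> real" where
  "cc r = (if even r then \<mu> powr (real (r div 2) / real s)
      else \<mu> powr (-1 + real (r div 2) / real s))"

definition gg :: "nat \<Rightarrow> real" where
  "gg r = (if even r then \<mu> powr (- (real (r div 2) / real s))
      else \<mu> powr (1 - real (r div 2) / real s))"

definition \<nu> :: real where "\<nu> = \<mu> powr (-1 - 1 / real s)"

definition dd :: "nat \<Rightarrow> real" where
  "dd x = (if even (x div n) then \<mu> else \<nu>)"

fun Hf :: "(nat \<Rightarrow> nat \<Rightarrow> nat \<Rightarrow> nat \<Rightarrow> real) \<Rightarrow> nat \<Rightarrow> nat \<Rightarrow> nat \<Rightarrow> nat \<Rightarrow> real" where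
  "Hf b k 0 p q = rf b k p q"
| "Hf b k (Suc l) p q = (\<Sum>x<(2*s+1)*n. Qf b k p x * (dd x * Hf b (Suc k) l x q))"

lemma scale_eq: "scale \<mu> s b = (\<lambda>k r p q. cc r * b k r p q)"
  unfolding scale_def cc_def by simp

lemma mu_pow1: "\<mu> powr 1 = \<mu>" using mu by simp

lemma mu_nu: "\<mu> * \<nu> = \<mu> powr (- 1 / real s)"
proof -
  have "\<mu> * \<nu> = \<mu> powr (1 + (-1 - 1 / real s))"
    unfolding \<nu>_def powr_add mu_pow1 ..
  then show ?thesis by simp
qed

lemma cc_shift: "cc (Suc r) * (if even r then \<mu> else \<nu>) = cc r"
proof (cases "even r")
  case True
  then obtain t where t: "r = 2*t" by blast
  have "cc (Suc r) * \<mu> = \<mu> powr ((-1 + real t / real s) + 1)"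
    unfolding powr_add mu_pow1 cc_def using t by simp
  also have "\<dots> = cc r" unfolding cc_def using t by simp
  finally show ?thesis using True by simp
next
  case False
  then obtain t where t: "r = 2*t+1" using oddE by blast
  have "Suc r div 2 = Suc t" using t by simp
  then have "cc (Suc r) * \<nu> = \<mu> powr (real (Suc t) / real s + (-1 - 1 / real s))"
    unfolding powr_add \<nu>_def cc_def using t by simp
  also have "real (Suc t) / real s + (-1 - 1 / real s) = -1 + real t / real s"
    by (simp add: add_divide_distrib diff_divide_distrib)
  also have "\<mu> powr \<dots> = cc r" unfolding cc_def using t by simp
  finally show ?thesis using False by simp
qed

lemma cc_last: "cc (2*s) = \<mu>"
  unfolding cc_def using s1 mu by simp

lemma cc_gg: "cc r * gg r = 1"
  unfolding cc_def gg_def using mu by (simp add: powr_add[symmetric])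

lemma gg_m: "gg (2*s+1) = 1"
  unfolding gg_def using mu s1 by (simp add: less_imp_neq[symmetric])

lemma gg_0: "gg 0 = 1" unfolding gg_def using mu by simp
lemma gg_1: "gg 1 = \<mu>" unfolding gg_def using mu by simp
lemma gg_SS: "gg (Suc (Suc l)) = (\<mu> * \<nu>) * gg l"
proof -
  have e: "even (Suc (Suc l)) = even l" by simp
  have d: "real (Suc (Suc l) div 2) = 1 + real (l div 2)" by simp
  show ?thesis unfolding mu_nu gg_def e d
    by (simp add: powr_add[symmetric] add_divide_distrib diff_divide_distrib algebra_simps)
qed

lemma Qscale: "Qf (scale \<mu> s b) k p x * cc (x div n) = cc (p div n) * Qf b k p x * dd x"
proof -
  have "x div n = 2 * s \<Longrightarrow> ?thesis"
    unfolding Qf_def scale_eq dd_def by (simp add: cc_last)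
  moreover have "x div n \<noteq> 2 * s \<Longrightarrow> p div n = x div n + 1 \<Longrightarrow> ?thesis"
    unfolding Qf_def scale_eq dd_def using cc_shift[of "x div n"] by (auto split: if_splits)
  moreover have "x div n \<noteq> 2 * s \<Longrightarrow> p div n \<noteq> x div n + 1 \<Longrightarrow> ?thesis"
    unfolding Qf_def scale_eq dd_def by simp
  ultimately show ?thesis by blast
qed

lemma rscale: "rf (scale \<mu> s b) k p q = cc (p div n) * rf b k p q"
  unfolding rf_def scale_eq by simp

lemma F_scaled: "Ff (scale \<mu> s b) k l p q = cc (p div n) * Hf b k l p q"
proof (induction l arbitrary: k p q)
  case 0
  then show ?case by (simp add: rscale)
next
  case (Suc l)
  have "Ff (scale \<mu> s b) k (Suc l) p q
      = (\<Sum>x<(2*s+1)*n. Qf (scale \<mu> s b) k p x * cc (x div n) * Hf b (Suc k) l x q)"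
    by (simp add: Suc mult.assoc)
  also have "\<dots> = (\<Sum>x<(2*s+1)*n. cc (p div n) * (Qf b k p x * (dd x * Hf b (Suc k) l x q)))"
    by (rule sum.cong) (simp_all add: Qscale mult.assoc)
  also have "\<dots> = cc (p div n) * Hf b k (Suc l) p q"
    by (simp add: sum_distrib_left)
  finally show ?case .
qed

lemma KQ: "dd x * Qf b k x y * dd y = (\<mu> * \<nu>) * Qf b k x y
   + (if y div n = 2*s then \<mu> * (\<mu> - \<nu>) * rf b k x (y mod n) else 0)"
proof -
  have "y div n = 2 * s \<Longrightarrow> ?thesis"
    unfolding Qf_def dd_def rf_def by (simp add: algebra_simps)
  moreover have "y div n \<noteq> 2 * s \<Longrightarrow> x div n = y div n + 1 \<Longrightarrow> ?thesis"
    unfolding Qf_def dd_def by (auto simp: algebra_simps)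
  moreover have "y div n \<noteq> 2 * s \<Longrightarrow> x div n \<noteq> y div n + 1 \<Longrightarrow> ?thesis"
    unfolding Qf_def dd_def by simp
  ultimately show ?thesis by blast
qed

lemma dd_rf: "dd x * rf b k x c = \<mu> * rf b k x c"
  unfolding dd_def rf_def by simp


lemma QQ_lin: "(\<Sum>x<(2*s+1)*n. Qf b k p x * (\<Sum>y<(2*s+1)*n. Qf b (Suc k) x y *
      (\<Sum>t<l. \<Sum>q<n. Ff b (Suc (Suc k)) t y q * C t q)))
    = (\<Sum>t<l. \<Sum>q<n. Ff b k (Suc (Suc t)) p q * C t q)"
proof -
  have "(\<Sum>t<l. \<Sum>q<n. Ff b k (Suc (Suc t)) p q * C t q)
     = (\<Sum>t<l. \<Sum>q<n. \<Sum>x<(2*s+1)*n. \<Sum>y<(2*s+1)*n. Qf b k p x * (Qf b (Suc k) x y * (Ff b (Suc (Suc k)) t y q * C t q)))"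
    by (simp add: sum_distrib_left sum_distrib_right mult.assoc)
  also have "\<dots> = (\<Sum>x<(2*s+1)*n. \<Sum>y<(2*s+1)*n. \<Sum>t<l. \<Sum>q<n. Qf b k p x * (Qf b (Suc k) x y * (Ff b (Suc (Suc k)) t y q * C t q)))"
    by (rule swap4[symmetric])
  also have "\<dots> = (\<Sum>x<(2*s+1)*n. Qf b k p x * (\<Sum>y<(2*s+1)*n. Qf b (Suc k) x y *
      (\<Sum>t<l. \<Sum>q<n. Ff b (Suc (Suc k)) t y q * C t q)))"
    by (simp add: sum_distrib_left)
  finally show ?thesis by simp
qed

lemma lastblock: "(\<Sum>y<(2*s+1)*n. (if y div n = 2*s then f (y mod n) * h y else (0::real)))
   = (\<Sum>q<n. f q * h (2*s*n+q))"
proof -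
  have np: "0 < n" using n1 by simp
  have "(\<Sum>y<(2*s+1)*n. (if y div n = 2*s then f (y mod n) * h y else (0::real)))
     = (\<Sum>t<2*s+1. \<Sum>q<n. (if (t*n+q) div n = 2*s then f ((t*n+q) mod n) * h (t*n+q) else 0))"
    by (rule sum_blocks)
  also have "\<dots> = (\<Sum>t<2*s+1. if t = 2*s then (\<Sum>q<n. f q * h (t*n+q)) else 0)"
    by (rule sum.cong[OF refl]) (use np in auto)
  also have "\<dots> = (\<Sum>q<n. f q * h (2*s*n+q))"
    by (simp add: sum.delta)
  finally show ?thesis .
qed

lemma decomp: "\<exists>C. (\<forall>t q c. even t \<longrightarrow> C t q c = 0) \<and>
   (\<forall>p c. Hf b k l p c = gg l * Ff b k l p c + (\<Sum>t<l. \<Sum>q<n. Ff b k t p q * C t q c))"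
proof (induction l arbitrary: k rule: less_induct)
  case (less l)
  consider "l = 0" | "l = 1" | l' where "l = Suc (Suc l')"
    by (metis One_nat_def not0_implies_Suc)
  then show ?case
  proof cases
    case 1
    show ?thesis by (rule exI[of _ "\<lambda>t q c. 0"]) (simp add: 1 gg_0)
  next
    case 2
    have "Hf b k 1 p c = gg 1 * Ff b k 1 p c" for p c
      using gg_1 by (simp add: dd_rf sum_distrib_left mult_ac)
    then show ?thesis by (intro exI[of _ "\<lambda>t q c. 0"]) (simp add: 2)
  next
    case 3
    from less[of l' "Suc (Suc k)"] 3 obtain C where
      Cev: "\<forall>t q c. even t \<longrightarrow> C t q c = 0" and
      CH: "\<forall>p c. Hf b (Suc (Suc k)) l' p c = gg l' * Ff b (Suc (Suc k)) l' p c
          + (\<Sum>t<l'. \<Sum>q<n. Ff b (Suc (Suc k)) t p q * C t q c)" by auto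
    let ?H = "Hf b (Suc (Suc k)) l'"
    define C' where "C' t q c = (if t = 1 then \<mu> * (\<mu> - \<nu>) * ?H (2*s*n+q) c else 0)
        + (if 2 \<le> t then (\<mu> * \<nu>) * C (t - 2) q c else 0)" for t q c
    have C'ev: "\<forall>t q c. even t \<longrightarrow> C' t q c = 0"
    proof (intro allI impI)
      fix t q c :: nat assume "even t"
      then show "C' t q c = 0" unfolding C'_def using Cev by (auto simp: even_diff_nat)
    qed
    have main: "Hf b k l p c = gg l * Ff b k l p c + (\<Sum>t<l. \<Sum>q<n. Ff b k t p q * C' t q c)" for p c
    proof -
      let ?d = "(2*s+1)*n"
      have "Hf b k l p c = (\<Sum>x<?d. Qf b k p x * (\<Sum>y<?d. (dd x * Qf b (Suc k) x y * dd y) * ?H y c))"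
        unfolding 3 by (simp add: sum_distrib_left mult_ac)
      also have "\<dots> = (\<Sum>x<?d. Qf b k p x * (\<Sum>y<?d. ((\<mu> * \<nu>) * (Qf b (Suc k) x y * ?H y c)
           + (if y div n = 2*s then \<mu> * (\<mu> - \<nu>) * (rf b (Suc k) x (y mod n) * ?H y c) else 0))))"
        apply (rule sum.cong[OF refl])
        apply (rule arg_cong[where f="\<lambda>z. Qf b k p _ * z"])
        apply (rule sum.cong[OF refl])
        apply (simp only: KQ)
        apply (simp add: algebra_simps)
        done
      also have "\<dots> = (\<mu> * \<nu>) * (\<Sum>x<?d. Qf b k p x * (\<Sum>y<?d. Qf b (Suc k) x y * ?H y c))
          + \<mu> * (\<mu> - \<nu>) * (\<Sum>x<?d. Qf b k p x * (\<Sum>y<?d. (if y div n = 2*s then rf b (Suc k) x (y mod n) * ?H y c else 0)))"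
      proof -
        have e: "(if P then z * Y else 0) = z * (if P then Y else (0::real))" for P z Y by simp
        have i: "(\<Sum>y<?d. ((\<mu> * \<nu>) * (Qf b (Suc k) x y * ?H y c)
           + (if y div n = 2*s then \<mu> * (\<mu> - \<nu>) * (rf b (Suc k) x (y mod n) * ?H y c) else 0)))
           = (\<mu> * \<nu>) * (\<Sum>y<?d. Qf b (Suc k) x y * ?H y c)
           + \<mu> * (\<mu> - \<nu>) * (\<Sum>y<?d. (if y div n = 2*s then rf b (Suc k) x (y mod n) * ?H y c else 0))" for x
          unfolding sum.distrib e sum_distrib_left[symmetric] ..
        show ?thesis unfolding i
          by (simp add: sum.distrib sum_distrib_left distrib_left mult_ac)
      qed
      also have "(\<Sum>x<?d. Qf b k p x * (\<Sum>y<?d. (if y div n = 2*s then rf b (Suc k) x (y mod n) * ?H y c else 0)))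
          = (\<Sum>x<?d. Qf b k p x * (\<Sum>q<n. rf b (Suc k) x q * ?H (2*s*n+q) c))"
        apply (rule sum.cong[OF refl])
        apply (rule arg_cong[where f="\<lambda>z. Qf b k p _ * z"])
        apply (rule lastblock)
        done
      also have "\<dots> = (\<Sum>q<n. Ff b k 1 p q * ?H (2*s*n+q) c)"
        by (simp add: sum_distrib_left sum_distrib_right mult_ac sum.swap[of _ "{..<n}"])
      also have "(\<Sum>x<?d. Qf b k p x * (\<Sum>y<?d. Qf b (Suc k) x y * ?H y c))
          = (\<Sum>x<?d. Qf b k p x * (\<Sum>y<?d. Qf b (Suc k) x y * (gg l' * Ff b (Suc (Suc k)) l' y c)))
          + (\<Sum>x<?d. Qf b k p x * (\<Sum>y<?d. Qf b (Suc k) x y * (\<Sum>t<l'. \<Sum>q<n. Ff b (Suc (Suc k)) t y q * C t q c)))"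
        by (simp add: CH distrib_left sum.distrib)
      also have "(\<Sum>x<?d. Qf b k p x * (\<Sum>y<?d. Qf b (Suc k) x y * (gg l' * Ff b (Suc (Suc k)) l' y c)))
          = gg l' * Ff b k l p c"
        unfolding 3 by (simp add: sum_distrib_left mult_ac)
      also have "(\<Sum>x<?d. Qf b k p x * (\<Sum>y<?d. Qf b (Suc k) x y * (\<Sum>t<l'. \<Sum>q<n. Ff b (Suc (Suc k)) t y q * C t q c)))
          = (\<Sum>t<l'. \<Sum>q<n. Ff b k (Suc (Suc t)) p q * C t q c)"
        by (rule QQ_lin)
      also have "(\<Sum>t<l. \<Sum>q<n. Ff b k t p q * C' t q c)
          = (\<Sum>q<n. Ff b k 0 p q * C' 0 q c) + (\<Sum>q<n. Ff b k 1 p q * C' 1 q c)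
            + (\<Sum>t<l'. \<Sum>q<n. Ff b k (Suc (Suc t)) p q * C' (Suc (Suc t)) q c)"
        unfolding 3 sum.lessThan_Suc_shift by (simp only: One_nat_def add.assoc)
      moreover have "(\<Sum>q<n. Ff b k 0 p q * C' 0 q c) = 0" by (simp add: C'_def)
      moreover have "(\<Sum>q<n. Ff b k 1 p q * C' 1 q c) = \<mu> * (\<mu> - \<nu>) * (\<Sum>q<n. Ff b k 1 p q * ?H (2*s*n+q) c)"
        by (simp add: C'_def sum_distrib_left mult_ac)
      moreover have "(\<Sum>t<l'. \<Sum>q<n. Ff b k (Suc (Suc t)) p q * C' (Suc (Suc t)) q c)
          = (\<mu> * \<nu>) * (\<Sum>t<l'. \<Sum>q<n. Ff b k (Suc (Suc t)) p q * C t q c)"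
        by (simp add: C'_def sum_distrib_left mult_ac)
      moreover have "gg l = (\<mu> * \<nu>) * gg l'" unfolding 3 by (rule gg_SS)
      ultimately show ?thesis by (simp add: algebra_simps)
    qed
    show ?thesis using C'ev main by blast
  qed
qed


lemma sum_odd_restrict:
  fixes B M :: nat
  assumes "B \<le> M" and "\<And>t. even t \<Longrightarrow> g t = (0::real)"
  shows "(\<Sum>t<M. if odd t \<and> t < B then g t else 0) = (\<Sum>t<B. g t)"
proof -
  have "(\<Sum>t<B. g t) = (\<Sum>t<M. if t < B then g t else 0)"
    by (rule sum.mono_neutral_cong_left) (use assms(1) in \<open>auto simp: less_le_trans\<close>)
  also have "\<dots> = (\<Sum>t<M. if odd t \<and> t < B then g t else 0)"
    by (rule sum.cong[OF refl]) (use assms(2) in auto)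
  finally show ?thesis by simp
qed

lemma main_loc:
  assumes i: "i \<in> {1..n}" and j: "j \<in> {1..n}" and l: "l < s"
  shows "Ddet (scale \<mu> s a) n s k (2*l) i j = \<mu> powr (real l / real s) * Ddet a n s k (2*l) i j"
proof -
  define d where "d = (2*s+1)*n"
  define c0 where "c0 = 2*l*n + (i - 1)"
  define colblk where "colblk c = (if c = c0 then 2*s+1 else c div n)" for c
  define colq where "colq c = (if c = c0 then j - 1 else c mod n)" for c
  define Mrep where "Mrep b = mat d d (\<lambda>(p,c). if c = c0 then Fmat b n s k (2*s+1) $$ (p, j-1)
              else Nmat b n s k $$ (p, c))" for b
  have np: "0 < n" using n1 by simp
  have i1: "i - 1 < n" using i by auto
  have j1: "j - 1 < n" using j by auto
  have c0d: "c0 < d"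
  proof -
    have "c0 < (2*l+1)*n" unfolding c0_def using i1 by simp
    also have "\<dots> \<le> (2*s+1)*n" using l by (intro mult_le_mono1) simp
    finally show ?thesis unfolding d_def .
  qed
  have c0div: "c0 div n = 2*l" unfolding c0_def using i1 np
    by (metis add.commute div_mult_self3 div_less mult.commute add_0_left neq0_conv)
  have DD: "Ddet b n s k (2*l) i j = det (Mrep b)" for b
    unfolding Ddet_def Mrep_def c0_def d_def by simp
  have Mcar: "Mrep b \<in> carrier_mat d d" for b unfolding Mrep_def by simp
  have Ment: "Mrep b $$ (p,c) = Ff b k (colblk c) p (colq c)" if "p < d" "c < d" for b p c
  proof (cases "c = c0")
    case True
    then show ?thesis unfolding Mrep_def colblk_def colq_def using that j1
      by (simp add: Fmat_Ff d_def)
  next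
    case False
    have "c div n < 2*s+1" using that(2) unfolding d_def
      by (simp add: less_mult_imp_div_less)
    moreover have "c mod n < n" using np by simp
    ultimately show ?thesis unfolding Mrep_def colblk_def colq_def using that False
      by (simp add: Nmat_def Fmat_Ff d_def)
  qed
  have cb: "colblk c \<le> 2*s+1" if "c < d" for c
  proof -
    have "c div n < 2*s+1" using that unfolding d_def by (simp add: less_mult_imp_div_less)
    then show ?thesis unfolding colblk_def by auto
  qed
  have "\<forall>L. \<exists>C. (\<forall>t q c. even t \<longrightarrow> C t q c = 0) \<and>
   (\<forall>p c. Hf a k L p c = gg L * Ff a k L p c + (\<Sum>t<L. \<Sum>q<n. Ff a k t p q * C t q c))"
    using decomp by blast
  then obtain CC where CC: "\<forall>L. (\<forall>t q c. even t \<longrightarrow> CC L t q c = 0) \<and>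
   (\<forall>p c. Hf a k L p c = gg L * Ff a k L p c + (\<Sum>t<L. \<Sum>q<n. Ff a k t p q * CC L t q c))"
    by (rule choice[THEN exE])
  have CCev: "\<And>L t q c. even t \<Longrightarrow> CC L t q c = 0" using CC by simp
  have CCH: "\<And>L p c. Hf a k L p c = gg L * Ff a k L p c + (\<Sum>t<L. \<Sum>q<n. Ff a k t p q * CC L t q c)"
    using CC by simp
  define U where "U = mat d d (\<lambda>(x,c). (if x = c then gg (colblk c) else 0)
     + (if odd (x div n) \<and> x div n < colblk c then CC (colblk c) (x div n) (x mod n) (colq c) else 0))"
  define Lm where "Lm = mat d d (\<lambda>(p,q). if p = q then cc (p div n) else 0)"
  have Ucar: "U \<in> carrier_mat d d" unfolding U_def by simp
  have Lcar: "Lm \<in> carrier_mat d d" unfolding Lm_def by simp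
  have MU: "(Mrep a * U) $$ (p,c) = gg (colblk c) * Ff a k (colblk c) p (colq c)
       + (\<Sum>t<colblk c. \<Sum>q<n. Ff a k t p q * CC (colblk c) t q (colq c))" if pc: "p < d" "c < d" for p c
  proof -
    have "(Mrep a * U) $$ (p,c) = (\<Sum>x<d. Mrep a $$ (p,x) * U $$ (x,c))"
      using Mcar[of a] Ucar pc by (simp add: scalar_prod_def lessThan_atLeast0)
    also have "\<dots> = (\<Sum>x<d. (if x = c then gg (colblk c) * Mrep a $$ (p,x) else 0)
        + (if odd (x div n) \<and> x div n < colblk c then Mrep a $$ (p,x) * CC (colblk c) (x div n) (x mod n) (colq c) else 0))"
      by (rule sum.cong[OF refl]) (use pc in \<open>auto simp: U_def algebra_simps\<close>)
    also have "\<dots> = gg (colblk c) * Mrep a $$ (p,c)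
        + (\<Sum>x<d. (if odd (x div n) \<and> x div n < colblk c then Mrep a $$ (p,x) * CC (colblk c) (x div n) (x mod n) (colq c) else 0))"
      using pc by (simp add: sum.distrib)
    also have "(\<Sum>x<d. (if odd (x div n) \<and> x div n < colblk c then Mrep a $$ (p,x) * CC (colblk c) (x div n) (x mod n) (colq c) else 0))
       = (\<Sum>t<2*s+1. \<Sum>q<n. (if odd ((t*n+q) div n) \<and> (t*n+q) div n < colblk c then Mrep a $$ (p,t*n+q) * CC (colblk c) ((t*n+q) div n) ((t*n+q) mod n) (colq c) else 0))"
      unfolding d_def by (rule sum_blocks)
    also have "\<dots> = (\<Sum>t<2*s+1. if odd t \<and> t < colblk c then (\<Sum>q<n. Ff a k t p q * CC (colblk c) t q (colq c)) else 0)"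
    proof (rule sum.cong[OF refl])
      fix t assume t: "t \<in> {..<2*s+1}"
      have tq: "(t*n+q) div n = t" "(t*n+q) mod n = q" if "q < n" for q using that np by auto
      have ne: "t*n+q \<noteq> c0" if "odd t" "q < n" for q using tq[OF that(2)] c0div that(1) by auto
      have lt: "t*n+q < d" if "q < n" for q
      proof -
        have "t*n+q < (t+1)*n" using that by simp
        also have "\<dots> \<le> (2*s+1)*n" using t by (intro mult_le_mono1) simp
        finally show ?thesis unfolding d_def .
      qed
      show "(\<Sum>q<n. (if odd ((t*n+q) div n) \<and> (t*n+q) div n < colblk c then Mrep a $$ (p,t*n+q) * CC (colblk c) ((t*n+q) div n) ((t*n+q) mod n) (colq c) else 0))
          = (if odd t \<and> t < colblk c then (\<Sum>q<n. Ff a k t p q * CC (colblk c) t q (colq c)) else 0)"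
        using tq ne lt pc by (auto simp: Ment colblk_def colq_def intro!: sum.cong)
    qed
    also have "\<dots> = (\<Sum>t<colblk c. \<Sum>q<n. Ff a k t p q * CC (colblk c) t q (colq c))"
      by (rule sum_odd_restrict) (use cb[OF pc(2)] CCev in auto)
    finally show ?thesis using Ment[OF pc] by simp
  qed
  have eq: "Mrep (scale \<mu> s a) = Lm * (Mrep a * U)"
  proof (rule eq_matI)
    fix p c assume p: "p < dim_row (Lm * (Mrep a * U))" and c: "c < dim_col (Lm * (Mrep a * U))"
    have pd: "p < d" and cd: "c < d" using p c Lcar Ucar by auto
    have MUc: "Mrep a * U \<in> carrier_mat d d" using mult_carrier_mat[OF Mcar[of a] Ucar] .
    have "(Lm * (Mrep a * U)) $$ (p,c) = (\<Sum>y<d. Lm $$ (p,y) * (Mrep a * U) $$ (y,c))"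
      using Lcar MUc pd cd by (subst index_mult_mat(1)) (auto simp: scalar_prod_def lessThan_atLeast0 simp del: index_mult_mat)
    also have "\<dots> = (\<Sum>y<d. if p = y then cc (p div n) * (Mrep a * U) $$ (p,c) else 0)"
      by (rule sum.cong[OF refl]) (use pd in \<open>auto simp: Lm_def\<close>)
    also have "\<dots> = cc (p div n) * (Mrep a * U) $$ (p,c)" using pd by simp
    also have "\<dots> = cc (p div n) * Hf a k (colblk c) p (colq c)"
      unfolding MU[OF pd cd] CCH[of "colblk c"] ..
    also have "\<dots> = Mrep (scale \<mu> s a) $$ (p,c)"
      unfolding Ment[OF pd cd] F_scaled ..
    finally show "Mrep (scale \<mu> s a) $$ (p,c) = (Lm * (Mrep a * U)) $$ (p,c)" by simp
  qed (use Mcar Lcar Ucar in auto)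
  have detL: "det Lm = (\<Prod>p=0..<d. cc (p div n))"
  proof -
    have "det Lm = (\<Prod>p=0..<d. Lm $$ (p,p))"
      by (rule det_weight[OF Lcar, of "\<lambda>_. 0"]) (auto simp: Lm_def)
    also have "\<dots> = (\<Prod>p=0..<d. cc (p div n))" by (rule prod.cong) (auto simp: Lm_def)
    finally show ?thesis .
  qed
  have detU: "det U = (\<Prod>c=0..<d. gg (colblk c))"
  proof -
    have "det U = (\<Prod>c=0..<d. U $$ (c,c))"
    proof (rule det_weight[OF Ucar, of "\<lambda>x. if odd (x div n) then x else d + x"])
      fix x c assume xc: "x < d" "c < d" "x \<noteq> c" "U $$ (x,c) \<noteq> 0"
      then have ox: "odd (x div n)" and lt: "x div n < colblk c"
        unfolding U_def by (auto split: if_splits)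
      show "(if odd (x div n) then x else d + x) < (if odd (c div n) then c else d + c)"
      proof (cases "c = c0")
        case True
        then show ?thesis using ox xc c0div by auto
      next
        case False
        then have "x div n < c div n" using lt unfolding colblk_def by simp
        then have "x < c" by (meson div_le_mono not_le)
        then show ?thesis using ox by auto
      qed
    qed
    also have "\<dots> = (\<Prod>c=0..<d. gg (colblk c))"
    proof (rule prod.cong[OF refl])
      fix c assume c: "c \<in> {0..<d}"
      have "\<not> (odd (c div n) \<and> c div n < colblk c)"
        using c0div by (cases "c = c0") (auto simp: colblk_def)
      then show "U $$ (c,c) = gg (colblk c)" using c unfolding U_def by auto
    qed
    finally show ?thesis .
  qed
  have prodval: "det Lm * det U = \<mu> powr (real l / real s)"
  proof -
    have "det Lm * det U = (\<Prod>c=0..<d. cc (c div n) * gg (colblk c))"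
      unfolding detL detU prod.distrib ..
    also have "\<dots> = cc (c0 div n) * gg (colblk c0) * (\<Prod>c\<in>{0..<d} - {c0}. cc (c div n) * gg (colblk c))"
      by (rule prod.remove) (use c0d in auto)
    also have "(\<Prod>c\<in>{0..<d} - {c0}. cc (c div n) * gg (colblk c)) = 1"
      by (rule prod.neutral) (auto simp: colblk_def cc_gg)
    also have "cc (c0 div n) * gg (colblk c0) = \<mu> powr (real l / real s)"
      unfolding c0div colblk_def using gg_m by (simp add: cc_def)
    finally show ?thesis by simp
  qed
  have "det (Mrep (scale \<mu> s a)) = det Lm * (det (Mrep a) * det U)"
    unfolding eq using Lcar Mcar Ucar
    by (simp add: det_mult[OF Lcar mult_carrier_mat[OF Mcar Ucar]] det_mult[OF Mcar Ucar])
  then show ?thesis unfolding DD using prodval by (simp add: algebra_simps)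
qed

end


theorem mainTheorem9:
  fixes n s N k :: nat and a :: "nat \<Rightarrow> nat \<Rightarrow> nat \<Rightarrow> nat \<Rightarrow> real" and \<mu> :: real
    and i j l :: nat
  assumes "n \<ge> 1" and "s \<ge> 1" and "N \<ge> 1"
    and periodic: "\<And>k' r p q. a (k' + N) r p q = a k' r p q"
    and "\<mu> > 0"
    and "i \<in> {1..n}" and "j \<in> {1..n}" and "l < s"
  shows "Ddet (scale \<mu> s a) n s k (2*l) i j = \<mu> powr (real l / real s) * Ddet a n s k (2*l) i j"
proof -
  interpret S n s \<mu> using assms by unfold_locales auto
  show ?thesis using main_loc assms by blast
qed

end
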